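(* Let $n\geq 4$ and let $Q$ be a regular $n$-gon. Then there exists a (symmetric) bilinear form $B$ on $X_Q^*$ such that $B([\psi_d],[\psi_{d'}])>0$ for all $d,d'\in\mathrm{Diag}_n$ that do not cross (including $d=d'$); i.e. $\Sigma_Q$ satisfies: $B(f_1^\perp,f_2^\perp)>0$ whenever facets $f_1,f_2$ of $\Sigma_Q$ share a vertex.
   Context: Let $Q$ be a convex $n$-gon in $\mathbb{R}^2$ with vertices $p_1,\dots,p_n$ in cyclic order; identify $p_i$ with label $i$, so triangulations of $Q$ (using only vertices of $Q$) are identified with elements of $\mathcal{T}_n$ (each triangulation identified with its set of diagonals) and diagonals with elements of $\mathrm{Diag}_n=\{\{i,j\}\subseteq[n]: i-j\not\equiv\pm1 \pmod n\}$. Two diagonals cross if they meet in the interior of $Q$. Let $X_Q$ be the space of formal combinations $\sum_{p\in V(Q)} c_p\cdot p$ with $\sum_p c_p=0$ and $\sum_p c_p p=0$ in $\mathbb{R}^2$; let $X_Q^*$ be the space of functions $V(Q)\to\mathbb{R}$ modulo restrictions of affine functions $\mathbb{R}^2\to\mathbb{R}$, with pairing $\langle[\psi],\sum_p c_p\cdot p\rangle=\sum_p c_p\psi(p)$. For a triangulation $T$ let $v_T=(\operatorname{area}(Q_{T,p}))_{p\in V(Q)}$ where $Q_{T,p}$ is the union of the triangles of $T$ having $p$ as a vertex. The secondary polytope $\Sigma_Q$ is the convex hull of the $v_T$, translated to lie in $X_Q$. It is known (Gelfand–Kapranov–Zelevinsky) that $\Sigma_Q$ is a full-dimensional polytope in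 the $(n-3)$-dimensional space $X_Q$ realizing the associahedron: its vertices are exactly the points $v_T$, $T\in\mathcal{T}_n$; its facets are $f_d$, $d\in\mathrm{Diag}_n$, where $f_d$ contains $v_T$ iff $d\in T$; and an outward normal of $f_d$ is $f_d^\perp=[\psi_d]$, where $\psi_d=\min(\ell_d,0)$ restricted to $V(Q)$ and $\ell_d$ is any nonzero affine function vanishing at both endpoints of $d$. Two facets $f_d,f_{d'}$ share a vertex iff $d,d'$ do not cross. *)

theory Defs
  imports "HOL-Analysis.Analysis"
begin

text \<open>Vertices are labelled 1..n, p i is the vertex with label i.
 p is a regular n-gon with vertices in cyclic order (either orientation).\<close>
definition regular_ngon :: "nat \<Rightarrow> (nat \<Rightarrow> real \<times> real) \<Rightarrow> bool" where
  "regular_ngon n p \<longleftrightarrow> (\<exists>c r \<theta> (\<epsilon>::real). r > 0 \<and> (\<epsilon> = 1 \<or> \<epsilon> = -1) \<and>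
     (\<forall>i\<in>{1..n}. p i = (fst c + r * cos (\<theta> + \<epsilon> * 2 * pi * real i / real n),
                         snd c + r * sin (\<theta> + \<epsilon> * 2 * pi * real i / real n))))"

definition Diag :: "nat \<Rightarrow> nat set set" where
  "Diag n = {{i, j} | i j. i \<in> {1..n} \<and> j \<in> {1..n} \<and> i \<noteq> j \<and>
                 i mod n \<noteq> (j + 1) mod n \<and> j mod n \<noteq> (i + 1) mod n}"

definition affine_fun :: "(real \<times> real \<Rightarrow> real) \<Rightarrow> bool" where
  "affine_fun l \<longleftrightarrow> (\<exists>a b c. \<forall>x. l x = a * fst x + b * snd x + c)"

definition diag_seg :: "(nat \<Rightarrow> real \<times> real) \<Rightarrow> nat set \<Rightarrow> (real \<times> real) set" where
  "diag_seg p d = \<Union>{closed_segment (p a) (p b) | a b. d = {a, b}}"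

definition crosses :: "nat \<Rightarrow> (nat \<Rightarrow> real \<times> real) \<Rightarrow> nat set \<Rightarrow> nat set \<Rightarrow> bool" where
  "crosses n p d d' \<longleftrightarrow> d \<noteq> d' \<and>
     (diag_seg p d \<inter> diag_seg p d' \<inter> interior (convex hull (p ` {1..n}))) \<noteq> {}"

definition psi :: "(nat \<Rightarrow> real \<times> real) \<Rightarrow> (real \<times> real \<Rightarrow> real) \<Rightarrow> nat \<Rightarrow> real" where
  "psi p l = (\<lambda>i. min (l (p i)) 0)"

definition bform :: "nat \<Rightarrow> (nat \<Rightarrow> nat \<Rightarrow> real) \<Rightarrow> (nat \<Rightarrow> real) \<Rightarrow> (nat \<Rightarrow> real) \<Rightarrow> real" where
  "bform n M f g = (\<Sum>i\<in>{1..n}. \<Sum>j\<in>{1..n}. M i j * f i * g j)"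

text \<open>The form descends to X_Q^* = functions modulo restrictions of affine functions.\<close>
definition descends :: "nat \<Rightarrow> (nat \<Rightarrow> real \<times> real) \<Rightarrow> (nat \<Rightarrow> nat \<Rightarrow> real) \<Rightarrow> bool" where
  "descends n p M \<longleftrightarrow> (\<forall>l g. affine_fun l \<longrightarrow>
      bform n M (\<lambda>i. l (p i)) g = 0 \<and> bform n M g (\<lambda>i. l (p i)) = 0)"

end

theory Submission
  imports Defs
begin

definition cc :: "nat \<Rightarrow> real" where "cc n = cos (2*pi/real n)"
definition ang :: "real \<Rightarrow> real \<Rightarrow> nat \<Rightarrow> real \<Rightarrow> real" where
  "ang \<theta> \<epsilon> n t = \<theta> + \<epsilon> * 2 * pi * t / real n"
definition PP :: "real \<times> real \<Rightarrow> real \<Rightarrow> real \<Rightarrow> real \<Rightarrow> nat \<Rightarrow> real \<Rightarrow> real \<times> real" where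
  "PP c r \<theta> \<epsilon> n t = (fst c + r * cos (ang \<theta> \<epsilon> n t), snd c + r * sin (ang \<theta> \<epsilon> n t))"

lemma ang_add: "n > 0 \<Longrightarrow> ang \<theta> \<epsilon> n (t + k) = ang \<theta> \<epsilon> n t + k * (\<epsilon> * 2 * pi / real n)"
  unfolding ang_def by (simp add: field_simps)

lemma eps_cos: "\<epsilon> = 1 \<or> \<epsilon> = -1 \<Longrightarrow> cos (\<epsilon> * x) = cos x"
  by auto
lemma eps_sin: "\<epsilon> = 1 \<or> \<epsilon> = -1 \<Longrightarrow> sin (\<epsilon> * x) = \<epsilon> * sin x"
  by auto

lemma PP_period:
  assumes "\<epsilon> = 1 \<or> \<epsilon> = -1" "n > 0"
  shows "PP c r \<theta> \<epsilon> n (t + real n) = PP c r \<theta> \<epsilon> n t"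
proof -
  have "ang \<theta> \<epsilon> n (t + real n) = ang \<theta> \<epsilon> n t + \<epsilon> * (2 * pi)"
    using assms(2) by (simp add: ang_add)
  moreover have "cos (x + \<epsilon> * (2 * pi)) = cos x" "sin (x + \<epsilon> * (2 * pi)) = sin x" for x
    using assms(1) by (auto simp: cos_add sin_add)
  ultimately show ?thesis unfolding PP_def by simp
qed

lemma l_PP:
  assumes "\<And>z. l z = A * fst z + B * snd z + C"
  shows "l (PP c r \<theta> \<epsilon> n t) = l c + (r * A) * cos (ang \<theta> \<epsilon> n t) + (r * B) * sin (ang \<theta> \<epsilon> n t)"
  unfolding PP_def assms by (simp add: algebra_simps)

lemma neighbours:
  assumes l: "\<And>z. l z = A * fst z + B * snd z + C" and e: "\<epsilon> = 1 \<or> \<epsilon> = -1" and n: "n > 0"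
  shows "l (PP c r \<theta> \<epsilon> n (t - 1)) + l (PP c r \<theta> \<epsilon> n (t + 1)) =
          2 * cc n * l (PP c r \<theta> \<epsilon> n t) + (2 - 2 * cc n) * l c"
proof -
  define x where "x = ang \<theta> \<epsilon> n t"
  define d where "d = \<epsilon> * 2 * pi / real n"
  have a1: "ang \<theta> \<epsilon> n (t - 1) = x - d" using ang_add[OF n, of \<theta> \<epsilon> t "-1"] unfolding x_def d_def by simp
  have a2: "ang \<theta> \<epsilon> n (t + 1) = x + d" using ang_add[OF n, of \<theta> \<epsilon> t 1] unfolding x_def d_def by simp
  have cd: "cos d = cc n" unfolding d_def cc_def using e by auto
  show ?thesis
    unfolding l_PP[OF l] a1 a2 x_def[symmetric] cos_add cos_diff sin_add sin_diff cd
    by (simp add: algebra_simps)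
qed

lemma tele: "(\<Sum>j\<in>{1..m}. f (real j) - f (real j - 1)) = f (real m) - (f 0 :: real)"
  by (induction m) (auto simp: sum.cl_ivl_Suc)

lemma sum_cos_sin:
  assumes e: "\<epsilon> = 1 \<or> \<epsilon> = -1" and n: "n \<ge> 2"
  shows "(\<Sum>j\<in>{1..n}. cos (ang \<theta> \<epsilon> n (real j))) = 0" "(\<Sum>j\<in>{1..n}. sin (ang \<theta> \<epsilon> n (real j))) = 0"
proof -
  define d where "d = \<epsilon> * 2 * pi / real n"
  have n0: "real n > 0" using n by simp
  have angj: "ang \<theta> \<epsilon> n t = \<theta> + t * d" for t unfolding ang_def d_def by simp
  have nd: "real n * d = \<epsilon> * (2 * pi)" unfolding d_def using n0 by simp
  have sd: "sin (d / 2) \<noteq> 0"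
  proof -
    have "d / 2 = \<epsilon> * (pi / real n)" unfolding d_def by simp
    moreover have "sin (pi / real n) > 0" using n by (intro sin_gt_zero) (auto simp: field_simps)
    ultimately show ?thesis using e by auto
  qed
  define f where "f t = sin (\<theta> + (t + 1/2) * d)" for t
  define g where "g t = - cos (\<theta> + (t + 1/2) * d)" for t
  have per: "cos (x + \<epsilon> * (2 * pi)) = cos x" "sin (x + \<epsilon> * (2 * pi)) = sin x" for x
    using e by (auto simp: cos_add sin_add)
  have fn: "f (real n) = f 0" unfolding f_def
    using per(2)[of "\<theta> + d/2"] nd by (simp add: algebra_simps)
  have gn: "g (real n) = g 0" unfolding g_def
    using per(1)[of "\<theta> + d/2"] nd by (simp add: algebra_simps)
  have fj: "2 * sin (d/2) * cos (ang \<theta> \<epsilon> n t) = f t - f (t - 1)" for t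
  proof -
    have a: "(\<theta> + (t + 1/2) * d - (\<theta> + (t - 1 + 1/2) * d)) / 2 = d / 2"
      "(\<theta> + (t + 1/2) * d + (\<theta> + (t - 1 + 1/2) * d)) / 2 = \<theta> + t * d"
      by (simp_all add: field_simps)
    show ?thesis unfolding f_def angj sin_diff_sin a by simp
  qed
  have gj: "2 * sin (d/2) * sin (ang \<theta> \<epsilon> n t) = g t - g (t - 1)" for t
  proof -
    have a: "(\<theta> + (t - 1 + 1/2) * d + (\<theta> + (t + 1/2) * d)) / 2 = \<theta> + t * d"
      "(\<theta> + (t + 1/2) * d - (\<theta> + (t - 1 + 1/2) * d)) / 2 = d / 2"
      by (simp_all add: field_simps)
    have "g t - g (t - 1) = cos (\<theta> + (t - 1 + 1/2) * d) - cos (\<theta> + (t + 1/2) * d)"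
      unfolding g_def by simp
    also have "\<dots> = 2 * sin (d/2) * sin (\<theta> + t * d)" unfolding cos_diff_cos a by simp
    finally show ?thesis unfolding angj by simp
  qed
  have "2 * sin (d/2) * (\<Sum>j\<in>{1..n}. cos (ang \<theta> \<epsilon> n (real j))) = 0"
    unfolding sum_distrib_left fj tele fn by simp
  then show "(\<Sum>j\<in>{1..n}. cos (ang \<theta> \<epsilon> n (real j))) = 0" using sd by simp
  have "2 * sin (d/2) * (\<Sum>j\<in>{1..n}. sin (ang \<theta> \<epsilon> n (real j))) = 0"
    unfolding sum_distrib_left gj tele gn by simp
  then show "(\<Sum>j\<in>{1..n}. sin (ang \<theta> \<epsilon> n (real j))) = 0" using sd by simp
qed

lemma sum_l:
  assumes l: "\<And>z. l z = A * fst z + B * snd z + C" and e: "\<epsilon> = 1 \<or> \<epsilon> = -1" and n: "n \<ge> 2"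
  shows "(\<Sum>j\<in>{1..n}. l (PP c r \<theta> \<epsilon> n (real j))) = real n * l c"
  unfolding l_PP[OF l] sum.distrib sum_distrib_left[symmetric] sum_cos_sin[OF e n] by simp

definition adj :: "nat \<Rightarrow> nat \<Rightarrow> nat \<Rightarrow> bool" where
  "adj n i j \<longleftrightarrow> i = Suc j \<or> j = Suc i \<or> (i = 1 \<and> j = n) \<or> (i = n \<and> j = 1)"
definition Mx :: "nat \<Rightarrow> nat \<Rightarrow> nat \<Rightarrow> real" where
  "Mx n i j = (if i = j then 2 * cc n else 0) - (if adj n i j then 1 else 0) - (2 * cc n - 2) / real n"
definition prv :: "nat \<Rightarrow> nat \<Rightarrow> nat" where "prv n j = (if j = 1 then n else j - 1)"
definition nxt :: "nat \<Rightarrow> nat \<Rightarrow> nat" where "nxt n j = (if j = n then 1 else Suc j)"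

lemma Mx_sym: "Mx n i j = Mx n j i"
  unfolding Mx_def adj_def by auto

lemma adj_set:
  assumes "n \<ge> 3" "j \<in> {1..n}"
  shows "{i\<in>{1..n}. adj n i j} = {prv n j, nxt n j}" "prv n j \<noteq> nxt n j"
  using assms unfolding adj_def prv_def nxt_def by auto

lemma adj_sum:
  fixes u :: "nat \<Rightarrow> real"
  assumes "n \<ge> 3" "j \<in> {1..n}"
  shows "(\<Sum>i\<in>{1..n}. (if adj n i j then 1 else 0) * u i) = u (prv n j) + u (nxt n j)"
proof -
  have "(\<Sum>i\<in>{1..n}. (if adj n i j then 1 else 0) * u i) = (\<Sum>i\<in>{1..n}. if adj n i j then u i else 0)"
    by (auto intro!: sum.cong)
  also have "\<dots> = (\<Sum>i\<in>{i\<in>{1..n}. adj n i j}. u i)"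
    by (rule sum.inter_filter[symmetric]) simp
  also have "\<dots> = u (prv n j) + u (nxt n j)" using adj_set[OF assms] by simp
  finally show ?thesis .
qed

lemma row_Mx:
  fixes u :: "nat \<Rightarrow> real"
  assumes "n \<ge> 3" "j \<in> {1..n}"
  shows "(\<Sum>i\<in>{1..n}. Mx n i j * u i) =
     2 * cc n * u j - u (prv n j) - u (nxt n j) - (2 * cc n - 2) / real n * sum u {1..n}"
proof -
  have "(\<Sum>i\<in>{1..n}. Mx n i j * u i) = (\<Sum>i\<in>{1..n}. (if i = j then 2 * cc n * u i else 0))
      - (\<Sum>i\<in>{1..n}. (if adj n i j then 1 else 0) * u i) - (\<Sum>i\<in>{1..n}. (2 * cc n - 2) / real n * u i)"
    unfolding sum_subtractf[symmetric] by (intro sum.cong) (auto simp: Mx_def algebra_simps)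
  also have "\<dots> = 2 * cc n * u j - (u (prv n j) + u (nxt n j)) - (2 * cc n - 2) / real n * sum u {1..n}"
    using adj_sum[OF assms, of u] assms by (simp add: sum_distrib_left)
  finally show ?thesis by simp
qed

lemma bform_row: "bform n M u v = (\<Sum>j\<in>{1..n}. v j * (\<Sum>i\<in>{1..n}. M i j * u i))"
  unfolding bform_def by (subst sum.swap) (simp add: sum_distrib_left sum_distrib_right algebra_simps)

lemma bform_sym: "(\<And>i j. M i j = M j i) \<Longrightarrow> bform n M u v = bform n M v u"
  unfolding bform_def by (subst sum.swap) (simp add: algebra_simps)

lemma bform_cong: "(\<And>i. i \<in> {1..n} \<Longrightarrow> u i = u' i) \<Longrightarrow> (\<And>i. i \<in> {1..n} \<Longrightarrow> v i = v' i)
   \<Longrightarrow> bform n M u v = bform n M u' v'"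
  unfolding bform_def by (intro sum.cong refl) auto

lemma bform_scale1: "bform n M (\<lambda>i. k * u i) v = k * bform n M u v"
  unfolding bform_def by (simp add: sum_distrib_left algebra_simps)
lemma bform_scale2: "bform n M u (\<lambda>i. k * v i) = k * bform n M u v"
  unfolding bform_def by (simp add: sum_distrib_left algebra_simps)
lemma bform_diff1: "bform n M (\<lambda>i. u i - w i) v = bform n M u v - bform n M w v"
  unfolding bform_def by (simp add: sum_subtractf[symmetric] algebra_simps)
lemma bform_diff2: "bform n M u (\<lambda>i. v i - w i) = bform n M u v - bform n M u w"
  unfolding bform_def by (simp add: sum_subtractf[symmetric] algebra_simps)

lemma bform_local:
  assumes "n \<ge> 3"
   and "\<And>j. j \<in> {1..n} \<Longrightarrow> v j \<noteq> 0 \<Longrightarrow> u j = 0 \<and> u (prv n j) = 0 \<and> u (nxt n j) = 0"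
  shows "bform n (Mx n) u v = (2 - 2 * cc n) / real n * sum u {1..n} * sum v {1..n}"
proof -
  have "bform n (Mx n) u v = (\<Sum>j\<in>{1..n}. v j * ((2 - 2 * cc n) / real n * sum u {1..n}))"
    unfolding bform_row
  proof (intro sum.cong refl)
    fix j assume j: "j \<in> {1..n}"
    show "v j * (\<Sum>i\<in>{1..n}. Mx n i j * u i) = v j * ((2 - 2 * cc n) / real n * sum u {1..n})"
    proof (cases "v j = 0")
      case False
      have "(\<Sum>i\<in>{1..n}. Mx n i j * u i) = (2 - 2 * cc n) / real n * sum u {1..n}"
        using assms(2)[OF j False] row_Mx[OF assms(1) j, of u] assms(1) by (simp add: field_simps)
      then show ?thesis by simp
    qed simp
  qed
  also have "\<dots> = (2 - 2 * cc n) / real n * sum u {1..n} * sum v {1..n}"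
    by (simp only: sum_distrib_right[symmetric] mult.commute)
  finally show ?thesis .
qed

definition SS :: "nat \<Rightarrow> real \<Rightarrow> real \<Rightarrow> real \<Rightarrow> real" where
  "SS n t a b = sin (pi * (t - a) / real n) * sin (pi * (t - b) / real n)"

lemma rep:
  assumes l: "\<And>z. l z = A * fst z + B * snd z + C" and e: "\<epsilon> = 1 \<or> \<epsilon> = -1" and n: "n > 0"
    and r: "r > 0" and nz: "\<exists>x. l x \<noteq> 0"
    and la: "l (PP c r \<theta> \<epsilon> n a) = 0" and lb: "l (PP c r \<theta> \<epsilon> n b) = 0"
    and sab: "sin (pi * (b - a) / real n) \<noteq> 0"
  shows "\<exists>\<kappa>. \<kappa> \<noteq> 0 \<and> (\<forall>t. l (PP c r \<theta> \<epsilon> n t) = \<kappa> * SS n t a b)"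
proof -
  define X where "X = r * A"
  define Y where "Y = r * B"
  define L0 where "L0 = l c"
  define \<phi> where "\<phi> t = ang \<theta> \<epsilon> n t" for t
  define m where "m = (\<phi> a + \<phi> b) / 2"
  define \<eta> where "\<eta> = (\<phi> b - \<phi> a) / 2"
  have lP: "l (PP c r \<theta> \<epsilon> n t) = L0 + X * cos (\<phi> t) + Y * sin (\<phi> t)" for t
    unfolding l_PP[OF l] X_def Y_def L0_def \<phi>_def by simp
  have half: "(\<phi> t - \<phi> s) / 2 = \<epsilon> * (pi * (t - s) / real n)" for t s
    unfolding \<phi>_def ang_def using n by (simp add: field_simps)
  have \<eta>': "\<eta> = \<epsilon> * (pi * (b - a) / real n)" unfolding \<eta>_def half ..
  have s\<eta>: "sin \<eta> \<noteq> 0" unfolding \<eta>' using e sab by auto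
  have h1: "L0 + X * cos (\<phi> a) + Y * sin (\<phi> a) = 0" using la lP by simp
  have h2: "L0 + X * cos (\<phi> b) + Y * sin (\<phi> b) = 0" using lb lP by simp
  have c1: "cos (\<phi> a) - cos (\<phi> b) = 2 * sin m * sin \<eta>"
    unfolding cos_diff_cos m_def \<eta>_def ..
  have aux: "(\<phi> a - \<phi> b) / 2 = - \<eta>" unfolding \<eta>_def by (simp add: field_simps)
  have c2: "sin (\<phi> a) - sin (\<phi> b) = - 2 * sin \<eta> * cos m"
    unfolding sin_diff_sin aux m_def by simp
  have "X * (cos (\<phi> a) - cos (\<phi> b)) + Y * (sin (\<phi> a) - sin (\<phi> b)) = 0"
    using h1 h2 by (simp add: algebra_simps)
  then have "2 * sin \<eta> * (X * sin m - Y * cos m) = 0"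
    unfolding c1 c2 by (simp add: algebra_simps)
  then have XY: "X * sin m = Y * cos m" using s\<eta> by simp
  define K where "K = X * cos m + Y * sin m"
  have rot: "X * cos x + Y * sin x = K * cos (x - m)" for x
  proof -
    have sc: "sin m * sin m + cos m * cos m = 1" using sin_cos_squared_add[of m] by (simp add: power2_eq_square)
    have "K * cos (x - m) = (X * cos m + Y * sin m) * (cos x * cos m + sin x * sin m)"
      unfolding K_def cos_diff by simp
    also have "\<dots> = cos x * (X * (cos m * cos m) + (Y * cos m) * sin m) + sin x * ((X * sin m) * cos m + Y * (sin m * sin m))"
      by (simp add: algebra_simps)
    also have "\<dots> = cos x * (X * (cos m * cos m) + (X * sin m) * sin m) + sin x * ((Y * cos m) * cos m + Y * (sin m * sin m))"
      unfolding XY ..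
    also have "\<dots> = cos x * (X * (sin m * sin m + cos m * cos m)) + sin x * (Y * (sin m * sin m + cos m * cos m))"
      by (simp only: algebra_simps)
    also have "\<dots> = X * cos x + Y * sin x" unfolding sc by (simp add: mult.commute)
    finally show ?thesis by simp
  qed
  have am: "\<phi> a - m = - \<eta>" unfolding m_def \<eta>_def by (simp add: field_simps)
  have L0e: "L0 = - K * cos \<eta>"
    using h1 rot[of "\<phi> a"] unfolding am by simp
  have main: "l (PP c r \<theta> \<epsilon> n t) = (-2 * K) * SS n t a b" for t
  proof -
    have "l (PP c r \<theta> \<epsilon> n t) = K * (cos (\<phi> t - m) - cos \<eta>)"
      unfolding lP add.assoc rot L0e by (simp add: algebra_simps)
    also have "cos (\<phi> t - m) - cos \<eta> = 2 * sin ((\<phi> t - \<phi> a) / 2) * sin ((\<phi> b - \<phi> t) / 2)"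
    proof -
      have a1: "(\<phi> t - m + \<eta>) / 2 = (\<phi> t - \<phi> a) / 2" "(\<eta> - (\<phi> t - m)) / 2 = (\<phi> b - \<phi> t) / 2"
        unfolding m_def \<eta>_def by (simp_all add: field_simps)
      show ?thesis unfolding cos_diff_cos a1 ..
    qed
    also have "sin ((\<phi> b - \<phi> t) / 2) = - sin ((\<phi> t - \<phi> b) / 2)"
    proof -
      have "(\<phi> b - \<phi> t) / 2 = - ((\<phi> t - \<phi> b) / 2)" by (simp add: field_simps)
      then show ?thesis by (simp only: sin_minus)
    qed
    also have "2 * sin ((\<phi> t - \<phi> a) / 2) * - sin ((\<phi> t - \<phi> b) / 2) = -2 * SS n t a b"
      unfolding half SS_def using e by auto
    finally show ?thesis by simp
  qed
  have K0: "K \<noteq> 0"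
  proof
    assume K0: "K = 0"
    have X0: "X = 0" using rot[of 0] K0 by simp
    have Y0: "Y = 0" using rot[of "pi/2"] K0 by simp
    have "L0 = 0" using L0e K0 by simp
    have "A = 0" "B = 0" using X0 Y0 r unfolding X_def Y_def by auto
    moreover have "C = 0" using \<open>L0 = 0\<close> \<open>A = 0\<close> \<open>B = 0\<close> unfolding L0_def l by simp
    ultimately show False using nz l by simp
  qed
  show ?thesis using main K0 by (intro exI[of _ "-2 * K"]) simp
qed

lemma exists_line:
  assumes n: "n > 0"
  shows "\<exists>g A B C. (\<forall>z. g z = A * fst z + B * snd z + C) \<and> g (PP c r \<theta> \<epsilon> n a) = 0 \<and>
     g (PP c r \<theta> \<epsilon> n b) = 0 \<and> (\<exists>x. g x \<noteq> 0)"
proof -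
  define \<phi> where "\<phi> t = ang \<theta> \<epsilon> n t" for t
  define m where "m = (\<phi> a + \<phi> b) / 2"
  define \<eta> where "\<eta> = (\<phi> b - \<phi> a) / 2"
  define g where "g z = cos m * fst z + sin m * snd z + (- cos m * fst c - sin m * snd c - r * cos \<eta>)" for z :: "real \<times> real"
  have gP: "g (PP c r \<theta> \<epsilon> n t) = r * cos (\<phi> t - m) - r * cos \<eta>" for t
    unfolding g_def PP_def \<phi>_def cos_diff by (simp add: algebra_simps)
  have am: "\<phi> a - m = - \<eta>" "\<phi> b - m = \<eta>" unfolding m_def \<eta>_def by (simp_all add: field_simps)
  have "g (c + (cos m, sin m)) - g c = 1"
    unfolding g_def using sin_cos_squared_add[of m] by (simp add: power2_eq_square algebra_simps)
  then have "\<exists>x. g x \<noteq> 0" by (metis diff_self zero_neq_one)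
  moreover have "g (PP c r \<theta> \<epsilon> n a) = 0" "g (PP c r \<theta> \<epsilon> n b) = 0"
    unfolding gP am by simp_all
  ultimately show ?thesis
    by (intro exI[of _ g] exI[of _ "cos m"] exI[of _ "sin m"] exI[of _ "- cos m * fst c - sin m * snd c - r * cos \<eta>"])
      (simp add: g_def)
qed

lemma cross_generic:
  fixes P1 P2 Q1 Q2 :: "real \<times> real"
  assumes g: "\<And>z. g z = A * fst z + B * snd z + C"
    and h: "\<And>z. h z = A' * fst z + B' * snd z + C'"
    and gP: "g P1 = 0" "g P2 = 0" and gQ: "g Q1 * g Q2 < 0"
    and hQ: "h Q1 = 0" "h Q2 = 0" and hP: "h P1 * h P2 < 0"
  shows "\<exists>x. x \<in> closed_segment P1 P2 \<and> x \<in> closed_segment Q1 Q2 \<and>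
             x \<in> interior (convex hull {P1, P2, Q1, Q2})"
proof -
  define s where "s = h P1 / (h P1 - h P2)"
  define t where "t = g Q1 / (g Q1 - g Q2)"
  have hd: "h P1 - h P2 \<noteq> 0" using hP by (auto simp: mult_less_0_iff)
  have gd: "g Q1 - g Q2 \<noteq> 0" using gQ by (auto simp: mult_less_0_iff)
  have s01: "0 < s" "s < 1" using hP unfolding s_def
    by (auto simp: mult_less_0_iff divide_simps)
  have t01: "0 < t" "t < 1" using gQ unfolding t_def
    by (auto simp: mult_less_0_iff divide_simps)
  define y where "y = (1 - s) *\<^sub>R P1 + s *\<^sub>R P2"
  define x where "x = (1 - t) *\<^sub>R Q1 + t *\<^sub>R Q2"
  have aff_g: "g ((1 - u) *\<^sub>R U + u *\<^sub>R V) = (1 - u) * g U + u * g V" for u U V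
    unfolding g by (simp add: algebra_simps)
  have aff_h: "h ((1 - u) *\<^sub>R U + u *\<^sub>R V) = (1 - u) * h U + u * h V" for u U V
    unfolding h by (simp add: algebra_simps)
  have gy: "g y = 0" unfolding y_def aff_g gP by simp
  have hy: "h y = 0" unfolding y_def aff_h s_def using hd by (simp add: field_simps)
  have hx: "h x = 0" unfolding x_def aff_h hQ by simp
  have gx: "g x = 0" unfolding x_def aff_g t_def using gd by (simp add: field_simps)
  have AB: "A \<noteq> 0 \<or> B \<noteq> 0"
  proof (rule ccontr)
    assume "\<not> ?thesis"
    then have "g Q1 = g P1" "g Q2 = g P1" unfolding g by auto
    then show False using gQ gP by simp
  qed
  have det: "A * B' - A' * B \<noteq> 0"
  proof
    assume d0: "A * B' - A' * B = 0"
    have e1: "A * (fst P1 - fst P2) + B * (snd P1 - snd P2) = 0"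
      using gP unfolding g by (simp add: algebra_simps)
    have e2: "A' * (fst P1 - fst P2) + B' * (snd P1 - snd P2) \<noteq> 0"
      using hd unfolding h by (simp add: algebra_simps)
    have "A * (A' * (fst P1 - fst P2) + B' * (snd P1 - snd P2)) - A' * (A * (fst P1 - fst P2) + B * (snd P1 - snd P2))
       = (A * B' - A' * B) * (snd P1 - snd P2)"
      by (simp add: algebra_simps)
    then have "A * (A' * (fst P1 - fst P2) + B' * (snd P1 - snd P2)) = A' * (A * (fst P1 - fst P2) + B * (snd P1 - snd P2))"
      using d0 by simp
    moreover have "B * (A' * (fst P1 - fst P2) + B' * (snd P1 - snd P2)) - B' * (A * (fst P1 - fst P2) + B * (snd P1 - snd P2))
       = (A' * B - A * B') * (fst P1 - fst P2)"
      by (simp add: algebra_simps)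
    then have "B * (A' * (fst P1 - fst P2) + B' * (snd P1 - snd P2)) = B' * (A * (fst P1 - fst P2) + B * (snd P1 - snd P2))"
      using d0 by simp
    ultimately show False using e1 e2 AB by auto
  qed
  have xy: "x = y"
  proof -
    have e1: "A * (fst x - fst y) + B * (snd x - snd y) = 0"
      using gx gy unfolding g by (simp add: algebra_simps)
    have e2: "A' * (fst x - fst y) + B' * (snd x - snd y) = 0"
      using hx hy unfolding h by (simp add: algebra_simps)
    have "(A * B' - A' * B) * (fst x - fst y) = B' * (A * (fst x - fst y) + B * (snd x - snd y)) - B * (A' * (fst x - fst y) + B' * (snd x - snd y))"
      by (simp add: algebra_simps)
    then have "(A * B' - A' * B) * (fst x - fst y) = 0" using e1 e2 by simp
    then have f: "fst x = fst y" using det by simp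
    have "(A * B' - A' * B) * (snd x - snd y) = A * (A' * (fst x - fst y) + B' * (snd x - snd y)) - A' * (A * (fst x - fst y) + B * (snd x - snd y))"
      by (simp add: algebra_simps)
    then have "(A * B' - A' * B) * (snd x - snd y) = 0" using e1 e2 by simp
    then have "snd x = snd y" using det by simp
    with f show ?thesis by (simp add: prod_eq_iff)
  qed
  have segP: "x \<in> closed_segment P1 P2"
    unfolding xy y_def closed_segment_def using s01 by auto
  have segQ: "x \<in> closed_segment Q1 Q2"
    unfolding x_def closed_segment_def using t01 by auto
  have d12: "P1 \<noteq> P2" using hd by auto
  have dQ: "Q1 \<noteq> Q2" using gd by auto
  have gQ1: "g Q1 \<noteq> 0" and gQ2: "g Q2 \<noteq> 0" using gQ by auto
  have dPQ: "P1 \<noteq> Q1" "P1 \<noteq> Q2" "P2 \<noteq> Q1" "P2 \<noteq> Q2"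
    using gP gQ1 gQ2 by auto
  define S where "S = {P1, P2, Q1, Q2}"
  define u where "u z = (if z = P1 then (1 - s) / 2 else if z = P2 then s / 2
      else if z = Q1 then (1 - t) / 2 else t / 2)" for z
  have uS: "sum u S = 1"
    unfolding S_def using d12 dQ dPQ by (simp add: u_def field_simps)
  have uP: "\<forall>z\<in>S. 0 < u z" unfolding S_def u_def using s01 t01 by auto
  have ux: "(\<Sum>z\<in>S. u z *\<^sub>R z) = x"
  proof -
    have "(\<Sum>z\<in>S. u z *\<^sub>R z) = ((1 - s) / 2) *\<^sub>R P1 + (s / 2) *\<^sub>R P2 + ((1 - t) / 2) *\<^sub>R Q1 + (t / 2) *\<^sub>R Q2"
      unfolding S_def using d12 dQ dPQ by (simp add: u_def algebra_simps)
    also have "\<dots> = (1/2) *\<^sub>R y + (1/2) *\<^sub>R x" unfolding x_def y_def by (simp add: prod_eq_iff field_simps)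
    also have "\<dots> = x" using xy by (simp add: scaleR_left_distrib[symmetric])
    finally show ?thesis .
  qed
  have xr: "x \<in> rel_interior (convex hull S)"
    using explicit_subset_rel_interior_convex_hull_minimal[of S] uS uP ux
    unfolding S_def by blast
  have ncol: "\<not> collinear {P1, Q1, P2}"
  proof
    assume "collinear {P1, Q1, P2}"
    then obtain w where "Q1 = w *\<^sub>R P1 + (1 - w) *\<^sub>R P2" using d12 by (auto simp: collinear_3_expand)
    then have "g Q1 = g (w *\<^sub>R P1 + (1 - w) *\<^sub>R P2)" by simp
    also have "\<dots> = w * g P1 + (1 - w) * g P2" unfolding g by (simp add: algebra_simps)
    finally have "g Q1 = w * g P1 + (1 - w) * g P2" .
    then show False using gP gQ1 by simp
  qed
  have sub: "{P1, Q1, P2} \<subseteq> S" unfolding S_def by auto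
  have "\<not> collinear S"
    using ncol collinear_subset[OF _ sub] by blast
  then have "aff_dim S > 1" by (simp add: collinear_aff_dim)
  moreover have "aff_dim S \<le> int DIM(real \<times> real)" by (rule aff_dim_le_DIM)
  ultimately have "aff_dim S = int DIM(real \<times> real)" by simp
  then have "affine hull S = UNIV" using aff_dim_eq_full by blast
  then have "rel_interior (convex hull S) = interior (convex hull S)"
    by (intro rel_interior_interior) simp
  with xr have "x \<in> interior (convex hull {P1, P2, Q1, Q2})" unfolding S_def by simp
  with segP segQ show ?thesis by blast
qed

lemma sin_pos_frac:
  assumes "0 < x" "x < real n"
  shows "sin (pi * x / real n) > 0"
proof -
  have n: "real n > 0" using assms by linarith
  have "pi * x / real n < pi" using assms n by (simp add: divide_less_eq)
  moreover have "0 < pi * x / real n" using assms n by simp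
  ultimately show ?thesis by (intro sin_gt_zero)
qed
lemma sin_neg_frac:
  assumes "x < 0" "- real n < x"
  shows "sin (pi * x / real n) < 0"
proof -
  have "sin (pi * (- x) / real n) > 0" using assms by (intro sin_pos_frac) auto
  moreover have "pi * (- x) / real n = - (pi * x / real n)" by simp
  ultimately show ?thesis by simp
qed

lemma SS_neg:
  assumes "a < i" "i < b" "b \<le> n" "1 \<le> a"
  shows "SS n (real i) (real a) (real b) < 0"
proof -
  have "sin (pi * (real i - real a) / real n) > 0" using assms by (intro sin_pos_frac) auto
  moreover have "sin (pi * (real i - real b) / real n) < 0" using assms by (intro sin_neg_frac) auto
  ultimately show ?thesis unfolding SS_def by (simp add: mult_pos_neg)
qed

lemma SS_pos:
  assumes "i < a \<and> i < b \<or> a < i \<and> b < i" "i \<in> {1..n}" "a \<in> {1..n}" "b \<in> {1..n}"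
  shows "SS n (real i) (real a) (real b) > 0"
  using assms(1)
proof
  assume h: "i < a \<and> i < b"
  have "sin (pi * (real i - real a) / real n) < 0" using h assms by (intro sin_neg_frac) auto
  moreover have "sin (pi * (real i - real b) / real n) < 0" using h assms by (intro sin_neg_frac) auto
  ultimately show ?thesis unfolding SS_def by (simp add: mult_neg_neg)
next
  assume h: "a < i \<and> b < i"
  have "sin (pi * (real i - real a) / real n) > 0" using h assms by (intro sin_pos_frac) auto
  moreover have "sin (pi * (real i - real b) / real n) > 0" using h assms by (intro sin_pos_frac) auto
  ultimately show ?thesis unfolding SS_def by simp
qed

lemma SS_nonneg:
  assumes "a < b" "i \<le> a \<or> b \<le> i" "i \<in> {1..n}" "a \<in> {1..n}" "b \<in> {1..n}"
  shows "SS n (real i) (real a) (real b) \<ge> 0"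
proof (cases "i = a \<or> i = b")
  case True then have "SS n (real i) (real a) (real b) = 0" unfolding SS_def by (elim disjE) simp_all
  then show ?thesis by simp
next
  case False
  then have "i < a \<and> i < b \<or> a < i \<and> b < i" using assms(1,2) by auto
  then have "SS n (real i) (real a) (real b) > 0" using assms(3,4,5) by (rule SS_pos)
  then show ?thesis by simp
qed

lemma SS_nonpos:
  assumes "a \<le> i" "i \<le> b" "b \<le> n" "1 \<le> a"
  shows "SS n (real i) (real a) (real b) \<le> 0"
proof (cases "i = a \<or> i = b")
  case True then have "SS n (real i) (real a) (real b) = 0" unfolding SS_def by (elim disjE) simp_all
  then show ?thesis by simp
next
  case False
  then have "a < i" "i < b" using assms(1,2) by auto
  then have "SS n (real i) (real a) (real b) < 0" using assms(3,4) by (intro SS_neg)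
  then show ?thesis by simp
qed

definition Fv :: "nat \<Rightarrow> nat \<Rightarrow> nat \<Rightarrow> nat \<Rightarrow> real" where
  "Fv n a b i = min (SS n (real i) (real a) (real b)) 0"
definition Gv :: "nat \<Rightarrow> nat \<Rightarrow> nat \<Rightarrow> nat \<Rightarrow> real" where
  "Gv n a b i = min (- SS n (real i) (real a) (real b)) 0"

lemma sum_Fv_neg:
  assumes "1 \<le> a" "a + 1 < b" "b \<le> n"
  shows "sum (Fv n a b) {1..n} < 0"
proof -
  have "0 < sum (\<lambda>i. - Fv n a b i) {1..n}"
  proof (rule sum_pos2)
    show "a + 1 \<in> {1..n}" using assms by auto
    show "0 < - Fv n a b (a + 1)" unfolding Fv_def using SS_neg[of a "a+1" b n] assms by auto
    show "\<And>i. i \<in> {1..n} \<Longrightarrow> 0 \<le> - Fv n a b i" unfolding Fv_def by auto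
  qed simp
  moreover have "sum (\<lambda>i. - Fv n a b i) {1..n} = - sum (Fv n a b) {1..n}" by (rule sum_negf)
  ultimately show ?thesis by linarith
qed

lemma sum_Gv_neg:
  assumes "1 \<le> a" "a < b" "b \<le> n" "\<not> (a = 1 \<and> b = n)"
  shows "sum (Gv n a b) {1..n} < 0"
proof -
  obtain k where k: "k \<in> {1..n}" "k < a \<or> b < k"
  proof (cases "a = 1")
    case True then show ?thesis using that[of n] assms by auto
  next
    case False then show ?thesis using that[of 1] assms by auto
  qed
  have "0 < sum (\<lambda>i. - Gv n a b i) {1..n}"
  proof (rule sum_pos2)
    show "k \<in> {1..n}" using k by auto
    show "0 < - Gv n a b k" unfolding Gv_def using SS_pos[of k a b n] assms k by auto
    show "\<And>i. i \<in> {1..n} \<Longrightarrow> 0 \<le> - Gv n a b i" unfolding Gv_def by auto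
  qed simp
  moreover have "sum (\<lambda>i. - Gv n a b i) {1..n} = - sum (Gv n a b) {1..n}" by (rule sum_negf)
  ultimately show ?thesis by linarith
qed

lemma cc_lt1: "n \<ge> 4 \<Longrightarrow> cc n < 1"
proof -
  assume n: "n \<ge> 4"
  have "0 < 2 * pi / real n" using n by simp
  moreover have "2 * pi / real n \<le> pi" using n by (simp add: field_simps)
  ultimately have "cos (2 * pi / real n) < cos 0"
    by (intro cos_monotone_0_pi) auto
  then show ?thesis unfolding cc_def by simp
qed

lemma pos_from_local:
  assumes "n \<ge> 4" "\<And>j. j \<in> {1..n} \<Longrightarrow> v j \<noteq> 0 \<Longrightarrow> u j = 0 \<and> u (prv n j) = 0 \<and> u (nxt n j) = 0"
    "sum u {1..n} < 0" "sum v {1..n} < 0"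
  shows "bform n (Mx n) u v > 0"
proof -
  have n3: "n \<ge> 3" using assms(1) by linarith
  have e: "bform n (Mx n) u v = (2 - 2 * cc n) / real n * sum u {1..n} * sum v {1..n}"
    by (rule bform_local[OF n3 assms(2)])
  have k: "(2 - 2 * cc n) / real n > 0" using cc_lt1[OF assms(1)] assms(1) by simp
  have p: "sum u {1..n} * sum v {1..n} > 0" using assms(3,4) by (rule mult_neg_neg)
  have "(2 - 2 * cc n) / real n * (sum u {1..n} * sum v {1..n}) > 0" using k p by (rule mult_pos_pos)
  then show ?thesis unfolding e by (simp only: mult.assoc)
qed

lemma pos_disjoint:
  assumes "n \<ge> 4" "1 \<le> a" "a + 1 < b" "b \<le> a'" "a' + 1 < b'" "b' \<le> n"
  shows "bform n (Mx n) (Fv n a b) (Fv n a' b') > 0"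
proof -
  have s1: "sum (Fv n a b) {1..n} < 0" by (rule sum_Fv_neg) (use assms in linarith)+
  have s2: "sum (Fv n a' b') {1..n} < 0" by (rule sum_Fv_neg) (use assms in linarith)+
  show ?thesis
proof (rule pos_from_local[OF assms(1) _ s1 s2])
  fix j assume j: "j \<in> {1..n}" "Fv n a' b' j \<noteq> 0"
  have "SS n (real j) (real a') (real b') < 0" using j unfolding Fv_def by (auto simp: min_def split: if_splits)
  then have ja: "a' < j \<and> j < b'"
  proof -
    assume neg: "SS n (real j) (real a') (real b') < 0"
    show ?thesis
    proof (rule ccontr)
      assume "\<not> ?thesis"
      then have "j \<le> a' \<or> b' \<le> j" by auto
      then have "SS n (real j) (real a') (real b') \<ge> 0" using j assms by (intro SS_nonneg) auto
      with neg show False by simp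
    qed
  qed
  then have pn: "prv n j = j - 1" "nxt n j = j + 1" using assms unfolding prv_def nxt_def by auto
  have "Fv n a b k = 0" if "k \<in> {j - 1, j, j + 1}" for k
  proof -
    have "SS n (real k) (real a) (real b) \<ge> 0" using that ja assms by (intro SS_nonneg) auto
    then show ?thesis unfolding Fv_def by simp
  qed
  note z = this
  show "Fv n a b j = 0 \<and> Fv n a b (prv n j) = 0 \<and> Fv n a b (nxt n j) = 0"
    unfolding pn using z[of j] z[of "j - 1"] z[of "j + 1"] by simp
qed
qed

lemma pos_nested:
  assumes "n \<ge> 4" "1 \<le> a" "a \<le> a'" "a' + 1 < b'" "b' \<le> b" "b \<le> n" "\<not> (a = 1 \<and> b = n)"
  shows "bform n (Mx n) (Gv n a b) (Fv n a' b') > 0"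
proof -
  have ab: "a < b" using assms(3,4,5) by linarith
  have s1: "sum (Gv n a b) {1..n} < 0" using sum_Gv_neg[of a b n] assms(2,6,7) ab by blast
  have s2: "sum (Fv n a' b') {1..n} < 0" by (rule sum_Fv_neg) (use assms in linarith)+
  show ?thesis
proof (rule pos_from_local[OF assms(1) _ s1 s2])
  fix j assume j: "j \<in> {1..n}" "Fv n a' b' j \<noteq> 0"
  have "SS n (real j) (real a') (real b') < 0" using j unfolding Fv_def by (auto simp: min_def split: if_splits)
  then have ja: "a' < j \<and> j < b'"
  proof -
    assume neg: "SS n (real j) (real a') (real b') < 0"
    show ?thesis
    proof (rule ccontr)
      assume "\<not> ?thesis"
      then have "j \<le> a' \<or> b' \<le> j" by auto
      then have "SS n (real j) (real a') (real b') \<ge> 0" using j assms by (intro SS_nonneg) auto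
      with neg show False by simp
    qed
  qed
  then have pn: "prv n j = j - 1" "nxt n j = j + 1" using assms unfolding prv_def nxt_def by auto
  have "Gv n a b k = 0" if "k \<in> {j - 1, j, j + 1}" for k
  proof -
    have "SS n (real k) (real a) (real b) \<le> 0" using that ja assms by (intro SS_nonpos) auto
    then show ?thesis unfolding Gv_def by simp
  qed
  note z = this
  show "Gv n a b j = 0 \<and> Gv n a b (prv n j) = 0 \<and> Gv n a b (nxt n j) = 0"
    unfolding pn using z[of j] z[of "j - 1"] z[of "j + 1"] by simp
qed
qed

lemma diag_norm:
  assumes "d \<in> Diag n" "n \<ge> 4"
  shows "\<exists>a b. d = {a, b} \<and> 1 \<le> a \<and> a + 1 < b \<and> b \<le> n \<and> \<not> (a = 1 \<and> b = n)"
proof -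
  obtain i j where ij: "d = {i, j}" "i \<in> {1..n}" "j \<in> {1..n}" "i \<noteq> j"
    "i mod n \<noteq> (j + 1) mod n" "j mod n \<noteq> (i + 1) mod n"
    using assms(1) unfolding Diag_def by blast
  have m1: "(n + 1) mod n = 1" using assms(2) by (simp add: mod_Suc)
  have key: "\<exists>a b. d = {a, b} \<and> 1 \<le> a \<and> a + 1 < b \<and> b \<le> n \<and> \<not> (a = 1 \<and> b = n)"
    if "d = {x, y}" "x \<in> {1..n}" "y \<in> {1..n}" "x < y"
      "x mod n \<noteq> (y + 1) mod n" "y mod n \<noteq> (x + 1) mod n" for x y
  proof (intro exI conjI)
    show "d = {x, y}" by fact
    show "1 \<le> x" using that by auto
    show "y \<le> n" using that by auto
    show "x + 1 < y"
    proof (rule ccontr)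
      assume "\<not> x + 1 < y"
      then have "y = x + 1" using that by auto
      then show False using that(6) by simp
    qed
    show "\<not> (x = 1 \<and> y = n)"
    proof
      assume "x = 1 \<and> y = n"
      then show False using that(5) m1 assms(2) by simp
    qed
  qed
  show ?thesis
  proof (cases "i < j")
    case True then show ?thesis using key[of i j] ij by blast
  next
    case False
    then have "j < i" using ij by auto
    moreover have "d = {j, i}" using ij by auto
    ultimately show ?thesis using key[of j i] ij by blast
  qed
qed

lemma affine_coeffs: "affine_fun l \<Longrightarrow> \<exists>A B C. \<forall>z. l z = A * fst z + B * snd z + C"
  unfolding affine_fun_def by blast

lemma desc:
  assumes n: "n \<ge> 4" and e: "\<epsilon> = 1 \<or> \<epsilon> = -1"
    and pdef: "\<And>i. i \<in> {1..n} \<Longrightarrow> p i = PP c r \<theta> \<epsilon> n (real i)"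
  shows "descends n p (Mx n)"
  unfolding descends_def
proof (intro allI impI)
  fix l :: "real \<times> real \<Rightarrow> real" and g :: "nat \<Rightarrow> real"
  assume "affine_fun l"
  then obtain A B C where l: "\<And>z. l z = A * fst z + B * snd z + C" using affine_coeffs by blast
  define u where "u i = l (p i)" for i
  have n0: "n > 0" using n by simp
  have su: "sum u {1..n} = real n * l c"
  proof -
    have "sum u {1..n} = (\<Sum>j\<in>{1..n}. l (PP c r \<theta> \<epsilon> n (real j)))"
      unfolding u_def by (intro sum.cong) (auto simp: pdef)
    also have "\<dots> = real n * l c" using n by (intro sum_l[OF l e]) auto
    finally show ?thesis .
  qed
  have row: "(\<Sum>i\<in>{1..n}. Mx n i j * u i) = 0" if j: "j \<in> {1..n}" for j
  proof -
    have uj: "u j = l (PP c r \<theta> \<epsilon> n (real j))" unfolding u_def using j pdef by simp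
    have up: "u (prv n j) = l (PP c r \<theta> \<epsilon> n (real j - 1))"
    proof (cases "j = 1")
      case True
      have "PP c r \<theta> \<epsilon> n (real n) = PP c r \<theta> \<epsilon> n 0"
        using PP_period[OF e n0, of c r \<theta> 0] by simp
      then show ?thesis using True n unfolding u_def prv_def by (simp add: pdef)
    next
      case False
      then have "prv n j = j - 1" "j - 1 \<in> {1..n}" using j unfolding prv_def by auto
      moreover have "real (j - 1) = real j - 1" using False j by auto
      ultimately show ?thesis unfolding u_def by (simp add: pdef)
    qed
    have un: "u (nxt n j) = l (PP c r \<theta> \<epsilon> n (real j + 1))"
    proof (cases "j = n")
      case True
      have "PP c r \<theta> \<epsilon> n (1 + real n) = PP c r \<theta> \<epsilon> n 1"
        using PP_period[OF e n0, of c r \<theta> 1] by simp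
      then show ?thesis using True n unfolding u_def nxt_def by (simp add: pdef add.commute)
    next
      case False
      then have "nxt n j = j + 1" "j + 1 \<in> {1..n}" using j unfolding nxt_def by auto
      then show ?thesis unfolding u_def by (simp add: pdef add.commute)
    qed
    have nb: "u (prv n j) + u (nxt n j) = 2 * cc n * u j + (2 - 2 * cc n) * l c"
      unfolding up un uj by (rule neighbours[OF l e n0])
    have "(\<Sum>i\<in>{1..n}. Mx n i j * u i) = 2 * cc n * u j - u (prv n j) - u (nxt n j) - (2 * cc n - 2) / real n * sum u {1..n}"
      using row_Mx[of n j u] n j by simp
    also have "\<dots> = 0"
    proof -
      have q: "(2 * cc n - 2) / real n * (real n * l c) = (2 * cc n - 2) * l c" using n0 by simp
      show ?thesis unfolding su q using nb by (simp add: algebra_simps)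
    qed
    finally show ?thesis .
  qed
  have b1: "bform n (Mx n) u g = 0" unfolding bform_row using row by simp
  moreover have "bform n (Mx n) g u = 0" using b1 bform_sym[of "Mx n"] Mx_sym by metis
  ultimately show "bform n (Mx n) (\<lambda>i. l (p i)) g = 0 \<and> bform n (Mx n) g (\<lambda>i. l (p i)) = 0"
    unfolding u_def by simp
qed

lemma min_scale_pos: "(k::real) > 0 \<Longrightarrow> min (k * s) 0 = k * min s 0"
  by (cases "s \<le> 0") (auto simp: min_def mult_le_0_iff)
lemma min_scale_neg: "(k::real) < 0 \<Longrightarrow> min (k * s) 0 = (- k) * min (- s) 0"
  by (cases "s \<le> 0") (auto simp: min_def mult_le_0_iff)

lemma FG_eq:
  assumes S1: "\<And>v. bform n M (\<lambda>i. SS n (real i) (real a) (real b)) v = 0"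
    and S2: "\<And>v. bform n M v (\<lambda>i. SS n (real i) (real a) (real b)) = 0"
  shows "bform n M (Gv n a b) v = bform n M (Fv n a b) v" "bform n M v (Gv n a b) = bform n M v (Fv n a b)"
proof -
  have G: "Gv n a b = (\<lambda>i. Fv n a b i - SS n (real i) (real a) (real b))"
    unfolding Gv_def Fv_def by (auto simp: min_def)
  show "bform n M (Gv n a b) v = bform n M (Fv n a b) v" unfolding G bform_diff1 S1 by simp
  show "bform n M v (Gv n a b) = bform n M v (Fv n a b)" unfolding G bform_diff2 S2 by simp
qed

lemma psi_red:
  assumes k: "\<kappa> \<noteq> 0" and lk: "\<And>i. i \<in> {1..n} \<Longrightarrow> l (p i) = \<kappa> * SS n (real i) (real a) (real b)"
    and S1: "\<And>v. bform n M (\<lambda>i. SS n (real i) (real a) (real b)) v = 0"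
    and S2: "\<And>v. bform n M v (\<lambda>i. SS n (real i) (real a) (real b)) = 0"
  shows "bform n M (psi p l) v = \<bar>\<kappa>\<bar> * bform n M (Fv n a b) v"
        "bform n M v (psi p l) = \<bar>\<kappa>\<bar> * bform n M v (Fv n a b)"
proof -
  note fg = FG_eq[OF S1 S2]
  have "bform n M (psi p l) v = \<bar>\<kappa>\<bar> * bform n M (Fv n a b) v \<and>
        bform n M v (psi p l) = \<bar>\<kappa>\<bar> * bform n M v (Fv n a b)"
  proof (cases "\<kappa> > 0")
    case True
    have "bform n M (psi p l) v = bform n M (\<lambda>i. \<kappa> * Fv n a b i) v"
      by (rule bform_cong) (auto simp: psi_def lk Fv_def min_scale_pos[OF True])
    moreover have "bform n M v (psi p l) = bform n M v (\<lambda>i. \<kappa> * Fv n a b i)"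
      by (rule bform_cong) (auto simp: psi_def lk Fv_def min_scale_pos[OF True])
    ultimately show ?thesis using True by (simp add: bform_scale1 bform_scale2)
  next
    case False
    then have kn: "\<kappa> < 0" using k by simp
    have "bform n M (psi p l) v = bform n M (\<lambda>i. (- \<kappa>) * Gv n a b i) v"
      by (rule bform_cong) (auto simp: psi_def lk Gv_def min_scale_neg[OF kn])
    moreover have "bform n M v (psi p l) = bform n M v (\<lambda>i. (- \<kappa>) * Gv n a b i)"
      by (rule bform_cong) (auto simp: psi_def lk Gv_def min_scale_neg[OF kn])
    moreover have "bform n M (\<lambda>i. (- \<kappa>) * Gv n a b i) v = (- \<kappa>) * bform n M (Gv n a b) v"
      by (rule bform_scale1)
    moreover have "bform n M v (\<lambda>i. (- \<kappa>) * Gv n a b i) = (- \<kappa>) * bform n M v (Gv n a b)"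
      by (rule bform_scale2)
    ultimately show ?thesis using kn fg by simp
  qed
  then show "bform n M (psi p l) v = \<bar>\<kappa>\<bar> * bform n M (Fv n a b) v"
        "bform n M v (psi p l) = \<bar>\<kappa>\<bar> * bform n M v (Fv n a b)" by auto
qed

lemma sin_ne_idx: "x < y \<Longrightarrow> 1 \<le> x \<Longrightarrow> y \<le> n \<Longrightarrow> sin (pi * (real y - real x) / real n) \<noteq> 0"
  using sin_pos_frac[of "real y - real x" n] by auto

lemma cross_lemma:
  assumes n: "n \<ge> 4" and e: "\<epsilon> = 1 \<or> \<epsilon> = -1" and r: "r > 0"
    and pdef: "\<And>i. i \<in> {1..n} \<Longrightarrow> p i = PP c r \<theta> \<epsilon> n (real i)"
    and o: "1 \<le> a" "a < a'" "a' < b" "b < b'" "b' \<le> n"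
  shows "crosses n p {a, b} {a', b'}"
proof -
  have n0: "n > 0" using n by simp
  have pa: "p a = PP c r \<theta> \<epsilon> n (real a)" "p b = PP c r \<theta> \<epsilon> n (real b)"
    "p a' = PP c r \<theta> \<epsilon> n (real a')" "p b' = PP c r \<theta> \<epsilon> n (real b')"
    using o by (auto intro!: pdef)
  obtain g A B C where g: "\<forall>z. g z = A * fst z + B * snd z + C" "g (PP c r \<theta> \<epsilon> n (real a)) = 0"
    "g (PP c r \<theta> \<epsilon> n (real b)) = 0" "\<exists>x. g x \<noteq> 0"
    using exists_line[OF n0, of c r \<theta> \<epsilon> "real a" "real b"] by blast
  obtain \<kappa> where k: "\<kappa> \<noteq> 0" "\<forall>t. g (PP c r \<theta> \<epsilon> n t) = \<kappa> * SS n t (real a) (real b)"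
    using rep[of g A B C, OF g(1)[rule_format] e n0 r g(4) g(2) g(3)] sin_ne_idx[of a b n] o by auto
  obtain h A' B' C' where h: "\<forall>z. h z = A' * fst z + B' * snd z + C'" "h (PP c r \<theta> \<epsilon> n (real a')) = 0"
    "h (PP c r \<theta> \<epsilon> n (real b')) = 0" "\<exists>x. h x \<noteq> 0"
    using exists_line[OF n0, of c r \<theta> \<epsilon> "real a'" "real b'"] by blast
  obtain \<kappa>' where k': "\<kappa>' \<noteq> 0" "\<forall>t. h (PP c r \<theta> \<epsilon> n t) = \<kappa>' * SS n t (real a') (real b')"
    using rep[of h A' B' C', OF h(1)[rule_format] e n0 r h(4) h(2) h(3)] sin_ne_idx[of a' b' n] o by auto
  have s1: "SS n (real a') (real a) (real b) < 0" using o by (intro SS_neg) auto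
  have s2: "SS n (real b') (real a) (real b) > 0" using o by (intro SS_pos) auto
  have s3: "SS n (real a) (real a') (real b') > 0" using o by (intro SS_pos) auto
  have s4: "SS n (real b) (real a') (real b') < 0" using o by (intro SS_neg) auto
  have kk: "\<kappa> * \<kappa> > 0" "\<kappa>' * \<kappa>' > 0"
    using k(1) k'(1) by (metis mult_neg_neg mult_pos_pos linorder_neqE_linordered_idom)+
  have gQ: "g (p a') * g (p b') < 0"
  proof -
    have "g (p a') * g (p b') = (\<kappa> * \<kappa>) * (SS n (real a') (real a) (real b) * SS n (real b') (real a) (real b))"
      unfolding pa k(2)[rule_format] by (simp add: algebra_simps)
    moreover have "SS n (real a') (real a) (real b) * SS n (real b') (real a) (real b) < 0"
      using s1 s2 by (rule mult_neg_pos)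
    ultimately show ?thesis using kk(1) by (simp add: mult_pos_neg)
  qed
  have hP: "h (p a) * h (p b) < 0"
  proof -
    have "h (p a) * h (p b) = (\<kappa>' * \<kappa>') * (SS n (real a) (real a') (real b') * SS n (real b) (real a') (real b'))"
      unfolding pa k'(2)[rule_format] by (simp add: algebra_simps)
    moreover have "SS n (real a) (real a') (real b') * SS n (real b) (real a') (real b') < 0"
      using s3 s4 by (rule mult_pos_neg)
    ultimately show ?thesis using kk(2) by (simp add: mult_pos_neg)
  qed
  have gP: "g (p a) = 0" "g (p b) = 0" using g(2,3) pa by simp_all
  have hQ: "h (p a') = 0" "h (p b') = 0" using h(2,3) pa by simp_all
  obtain x where x: "x \<in> closed_segment (p a) (p b)" "x \<in> closed_segment (p a') (p b')"
    "x \<in> interior (convex hull {p a, p b, p a', p b'})"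
    using cross_generic[of g A B C h A' B' C', OF g(1)[rule_format] h(1)[rule_format] gP gQ hQ hP] by blast
  have sub: "{p a, p b, p a', p b'} \<subseteq> p ` {1..n}" using o by auto
  have "x \<in> interior (convex hull (p ` {1..n}))"
    using x(3) interior_mono[OF hull_mono[OF sub]] by blast
  moreover have "x \<in> diag_seg p {a, b}" unfolding diag_seg_def using x(1) by blast
  moreover have "x \<in> diag_seg p {a', b'}" unfolding diag_seg_def using x(2) by blast
  moreover have "{a, b} \<noteq> {a', b'}" using o by auto
  ultimately show ?thesis unfolding crosses_def by blast
qed

theorem lemma2p7:
  fixes n :: nat and p :: "nat \<Rightarrow> real \<times> real"
  assumes "n \<ge> 4" and "regular_ngon n p"
  shows "\<exists>M. (\<forall>i j. M i j = M j i) \<and> descends n p M \<and>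
    (\<forall>d\<in>Diag n. \<forall>d'\<in>Diag n. \<not> crosses n p d d' \<longrightarrow>
      (\<forall>l l'. affine_fun l \<and> (\<exists>x. l x \<noteq> 0) \<and> (\<forall>i\<in>d. l (p i) = 0) \<and>
              affine_fun l' \<and> (\<exists>x. l' x \<noteq> 0) \<and> (\<forall>i\<in>d'. l' (p i) = 0) \<longrightarrow>
              bform n M (psi p l) (psi p l') > 0))"
proof -
  have n: "n \<ge> 4" by fact
  have n0: "n > 0" using n by simp
  obtain c r \<theta> \<epsilon> where r: "r > 0" and e: "\<epsilon> = 1 \<or> \<epsilon> = -1" and pf:
    "\<forall>i\<in>{1..n}. p i = (fst c + r * cos (\<theta> + \<epsilon> * 2 * pi * real i / real n),
                         snd c + r * sin (\<theta> + \<epsilon> * 2 * pi * real i / real n))"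
    using assms(2) unfolding regular_ngon_def by blast
  have pdef: "p i = PP c r \<theta> \<epsilon> n (real i)" if "i \<in> {1..n}" for i
    using pf that unfolding PP_def ang_def by simp
  have desc: "descends n p (Mx n)" by (rule desc[OF n e pdef])
  have Sprop: "(\<forall>v. bform n (Mx n) (\<lambda>i. SS n (real i) (real a) (real b)) v = 0) \<and>
               (\<forall>v. bform n (Mx n) v (\<lambda>i. SS n (real i) (real a) (real b)) = 0)"
    if ab: "1 \<le> a" "a < b" "b \<le> n" for a b
  proof -
    obtain g A B C where g: "\<forall>z. g z = A * fst z + B * snd z + C" "g (PP c r \<theta> \<epsilon> n (real a)) = 0"
      "g (PP c r \<theta> \<epsilon> n (real b)) = 0" "\<exists>x. g x \<noteq> 0"
      using exists_line[OF n0, of c r \<theta> \<epsilon> "real a" "real b"] by blast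
    obtain \<kappa> where k: "\<kappa> \<noteq> 0" "\<forall>t. g (PP c r \<theta> \<epsilon> n t) = \<kappa> * SS n t (real a) (real b)"
      using rep[of g A B C, OF g(1)[rule_format] e n0 r g(4) g(2) g(3)] sin_ne_idx[of a b n] ab by auto
    have aff: "affine_fun (\<lambda>z. g z / \<kappa>)" unfolding affine_fun_def
      by (rule exI[of _ "A / \<kappa>"], rule exI[of _ "B / \<kappa>"], rule exI[of _ "C / \<kappa>"]) (simp add: g(1) add_divide_distrib)
    have eq: "g (p i) / \<kappa> = SS n (real i) (real a) (real b)" if "i \<in> {1..n}" for i
      using k that pdef[OF that] by simp
    show ?thesis
    proof (intro conjI allI)
      fix v
      have "bform n (Mx n) (\<lambda>i. g (p i) / \<kappa>) v = 0" using desc aff unfolding descends_def by blast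
      then show "bform n (Mx n) (\<lambda>i. SS n (real i) (real a) (real b)) v = 0"
        using bform_cong[of n "\<lambda>i. g (p i) / \<kappa>" "\<lambda>i. SS n (real i) (real a) (real b)" v v "Mx n"] eq by simp
      have "bform n (Mx n) v (\<lambda>i. g (p i) / \<kappa>) = 0" using desc aff unfolding descends_def by blast
      then show "bform n (Mx n) v (\<lambda>i. SS n (real i) (real a) (real b)) = 0"
        using bform_cong[of n v v "\<lambda>i. g (p i) / \<kappa>" "\<lambda>i. SS n (real i) (real a) (real b)" "Mx n"] eq by simp
    qed
  qed
  have repl: "\<exists>\<kappa>. \<kappa> \<noteq> 0 \<and> (\<forall>i\<in>{1..n}. l (p i) = \<kappa> * SS n (real i) (real a) (real b))"
    if ab: "1 \<le> a" "a < b" "b \<le> n" and l: "affine_fun l" "\<exists>x. l x \<noteq> 0" "l (p a) = 0" "l (p b) = 0" for a b l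
  proof -
    obtain A B C where lc: "\<And>z. l z = A * fst z + B * snd z + C" using affine_coeffs[OF l(1)] by blast
    have la: "l (PP c r \<theta> \<epsilon> n (real a)) = 0" "l (PP c r \<theta> \<epsilon> n (real b)) = 0"
      using l(3,4) pdef[of a] pdef[of b] ab by auto
    obtain \<kappa> where k: "\<kappa> \<noteq> 0" "\<forall>t. l (PP c r \<theta> \<epsilon> n t) = \<kappa> * SS n t (real a) (real b)"
      using rep[of l A B C, OF lc e n0 r l(2) la] sin_ne_idx[of a b n] ab by auto
    show ?thesis using k pdef by (intro exI[of _ \<kappa>]) auto
  qed
  have pos: "bform n (Mx n) (psi p l) (psi p l') > 0"
    if d: "d \<in> Diag n" "d' \<in> Diag n" "\<not> crosses n p d d'"
      and l: "affine_fun l" "\<exists>x. l x \<noteq> 0" "\<forall>i\<in>d. l (p i) = 0"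
      and l': "affine_fun l'" "\<exists>x. l' x \<noteq> 0" "\<forall>i\<in>d'. l' (p i) = 0" for d d' l l'
  proof -
    obtain a b where ab: "d = {a, b}" "1 \<le> a" "a + 1 < b" "b \<le> n" "\<not> (a = 1 \<and> b = n)"
      using diag_norm[OF d(1) n] by blast
    obtain a' b' where ab': "d' = {a', b'}" "1 \<le> a'" "a' + 1 < b'" "b' \<le> n" "\<not> (a' = 1 \<and> b' = n)"
      using diag_norm[OF d(2) n] by blast
    obtain \<kappa> where k: "\<kappa> \<noteq> 0" "\<forall>i\<in>{1..n}. l (p i) = \<kappa> * SS n (real i) (real a) (real b)"
      using repl[of a b l] ab l by auto
    obtain \<kappa>' where k': "\<kappa>' \<noteq> 0" "\<forall>i\<in>{1..n}. l' (p i) = \<kappa>' * SS n (real i) (real a') (real b')"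
      using repl[of a' b' l'] ab' l' by auto
    have S: "\<And>v. bform n (Mx n) (\<lambda>i. SS n (real i) (real a) (real b)) v = 0"
        "\<And>v. bform n (Mx n) v (\<lambda>i. SS n (real i) (real a) (real b)) = 0"
      using Sprop[of a b] ab by auto
    have S': "\<And>v. bform n (Mx n) (\<lambda>i. SS n (real i) (real a') (real b')) v = 0"
        "\<And>v. bform n (Mx n) v (\<lambda>i. SS n (real i) (real a') (real b')) = 0"
      using Sprop[of a' b'] ab' by auto
    have r1: "bform n (Mx n) (psi p l) (psi p l') = \<bar>\<kappa>\<bar> * bform n (Mx n) (Fv n a b) (psi p l')"
      using psi_red(1)[OF k(1) _ S] k(2) by auto
    have r2: "bform n (Mx n) (Fv n a b) (psi p l') = \<bar>\<kappa>'\<bar> * bform n (Mx n) (Fv n a b) (Fv n a' b')"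
      using psi_red(2)[OF k'(1) _ S'] k'(2) by auto
    have symM: "\<And>i j. Mx n i j = Mx n j i" by (rule Mx_sym)
    have FF: "bform n (Mx n) (Fv n a b) (Fv n a' b') > 0"
    proof -
      consider (c1) "b \<le> a'" | (c2) "b' \<le> a" | (c3) "a \<le> a' \<and> b' \<le> b" | (c4) "a' \<le> a \<and> b \<le> b'"
        | (c5) "a < a' \<and> a' < b \<and> b < b'" | (c6) "a' < a \<and> a < b' \<and> b' < b"
      proof -
        consider "b \<le> a'" | "b' \<le> a" | "a \<le> a' \<and> b' \<le> b" | "a' \<le> a \<and> b \<le> b'"
          | "a' < b" "a < b'" "\<not> (a \<le> a' \<and> b' \<le> b)" "\<not> (a' \<le> a \<and> b \<le> b')" by fastforce
        then show ?thesis
        proof cases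
          case 5
          show ?thesis
          proof (cases "a < a'")
            case True
            then have "b < b'" using 5 by auto
            then show ?thesis using True 5 that(5) by blast
          next
            case False
            then have "a' < a" using 5 by (cases "a = a'") auto
            then have "b' < b" using 5 by auto
            then show ?thesis using \<open>a' < a\<close> 5 that(6) by blast
          qed
        qed (use that in blast)+
      qed
      then show ?thesis
      proof cases
        case c1
        have "1 \<le> a" "a + 1 < b" "b \<le> a'" "a' + 1 < b'" "b' \<le> n" using c1 ab ab' by linarith+
        then show ?thesis by (rule pos_disjoint[OF n])
      next
        case c2
        have "1 \<le> a'" "a' + 1 < b'" "b' \<le> a" "a + 1 < b" "b \<le> n" using c2 ab ab' by linarith+
        then have "bform n (Mx n) (Fv n a' b') (Fv n a b) > 0" by (rule pos_disjoint[OF n])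
        moreover have "bform n (Mx n) (Fv n a b) (Fv n a' b') = bform n (Mx n) (Fv n a' b') (Fv n a b)"
          by (rule bform_sym[OF symM])
        ultimately show ?thesis by simp
      next
        case c3
        have "a \<le> a'" "a' + 1 < b'" "b' \<le> b" using c3 ab' by linarith+
        then have "bform n (Mx n) (Gv n a b) (Fv n a' b') > 0" by (rule pos_nested[OF n ab(2) _ _ _ ab(4) ab(5)])
        then show ?thesis using FG_eq(1)[OF S] by simp
      next
        case c4
        have "a' \<le> a" "a + 1 < b" "b \<le> b'" using c4 ab by linarith+
        then have "bform n (Mx n) (Gv n a' b') (Fv n a b) > 0" by (rule pos_nested[OF n ab'(2) _ _ _ ab'(4) ab'(5)])
        then have "bform n (Mx n) (Fv n a' b') (Fv n a b) > 0" using FG_eq(1)[OF S'] by simp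
        moreover have "bform n (Mx n) (Fv n a b) (Fv n a' b') = bform n (Mx n) (Fv n a' b') (Fv n a b)"
          by (rule bform_sym[OF symM])
        ultimately show ?thesis by simp
      next
        case c5
        have "a < a'" "a' < b" "b < b'" using c5 by linarith+
        with ab(2) ab'(4) have "crosses n p {a, b} {a', b'}" using cross_lemma[OF n e r pdef, of a a' b b'] by blast
        then show ?thesis using d(3) ab(1) ab'(1) by simp
      next
        case c6
        have "a' < a" "a < b'" "b' < b" using c6 by linarith+
        with ab'(2) ab(4) have "crosses n p {a', b'} {a, b}" using cross_lemma[OF n e r pdef, of a' a b' b] by blast
        then have "crosses n p {a, b} {a', b'}" unfolding crosses_def by blast
        then show ?thesis using d(3) ab(1) ab'(1) by simp
      qed
    qed
    have "\<bar>\<kappa>\<bar> * (\<bar>\<kappa>'\<bar> * bform n (Mx n) (Fv n a b) (Fv n a' b')) > 0"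
      using k(1) k'(1) FF by simp
    then show ?thesis unfolding r1 r2 .
  qed
  show ?thesis
  proof (intro exI[of _ "Mx n"] conjI allI ballI impI)
    show "\<And>i j. Mx n i j = Mx n j i" by (rule Mx_sym)
    show "descends n p (Mx n)" by (rule desc)
  next
    fix d d' l l'
    assume "d \<in> Diag n" "d' \<in> Diag n" "\<not> crosses n p d d'"
      "affine_fun l \<and> (\<exists>x. l x \<noteq> 0) \<and> (\<forall>i\<in>d. l (p i) = 0) \<and>
       affine_fun l' \<and> (\<exists>x. l' x \<noteq> 0) \<and> (\<forall>i\<in>d'. l' (p i) = 0)"
    then show "bform n (Mx n) (psi p l) (psi p l') > 0" using pos by blast
  qed
qed

end
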